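(* Let $\pi_1,\pi_2:\mathbb P^3\dashrightarrow\mathbb P^2$ be linear projections with non-coincident centers $c_1,c_2$. A permissible quadric $Q$ through $c_1,c_2$ defines a (non-degenerate quadratic) Cremona transformation $f:\mathbb P^2\dashrightarrow\mathbb P^2$ such that $f(\pi_1(p))=\pi_2(p)$ for every point $p\in Q$ (where defined). The base points of $f$ are $\pi_1(c_2)$ and the images under $\pi_1$ of the two lines contained in $Q$ passing through $c_1$. Similarly, the base points of $f^{-1}$ are $\pi_2(c_1)$ and the images under $\pi_2$ of the two lines contained in $Q$ passing through $c_2$.
   Context: Work over $\mathbb C$. A linear projection $\pi:\mathbb P^3\dashrightarrow\mathbb P^2$ is $p\mapsto Ap$, $A\in\mathbb C^{3\times4}$ of rank three, with center spanning $\ker A$. A permissible quadric (for centers $c_1\ne c_2$) is a smooth quadric surface containing $c_1,c_2$ but not containing the line $\overline{c_1c_2}$. A quadratic Cremona transformation is a birational map $\mathbb P^2\dashrightarrow\mathbb P^2$ given by three homogeneous quadrics; it has three base points and three exceptional lines, and is non-degenerate if these are distinct. *)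

theory Defs
  imports "HOL-Analysis.Analysis"
begin

text \<open>Points of projective space P^(n-1) over C are represented by nonzero vectors
  of complex^n; the projective point of a nonzero vector v is its class of
  nonzero scalar multiples.\<close>

definition proj_class :: "complex^'n \<Rightarrow> (complex^'n) set" where
  "proj_class v = {c *s v | c. c \<noteq> 0}"

definition qform :: "complex^'n^'n \<Rightarrow> complex^'n \<Rightarrow> complex" where
  "qform M x = (\<Sum>i\<in>UNIV. x $ i * (M *v x) $ i)"

definition linear_projection :: "complex^4^3 \<Rightarrow> complex^4 \<Rightarrow> bool" where
  "linear_projection A c \<longleftrightarrow> rank A = 3 \<and> c \<noteq> 0 \<and> A *v c = 0"

definition smooth_quadric :: "complex^4^4 \<Rightarrow> bool" where
  "smooth_quadric M \<longleftrightarrow> transpose M = M \<and> det M \<noteq> 0"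

definition on_quadric :: "complex^4^4 \<Rightarrow> complex^4 \<Rightarrow> bool" where
  "on_quadric M p \<longleftrightarrow> p \<noteq> 0 \<and> qform M p = 0"

definition permissible_quadric :: "complex^4^4 \<Rightarrow> complex^4 \<Rightarrow> complex^4 \<Rightarrow> bool" where
  "permissible_quadric M c1 c2 \<longleftrightarrow> smooth_quadric M \<and> qform M c1 = 0 \<and> qform M c2 = 0
     \<and> \<not> (\<forall>a b. qform M (a *s c1 + b *s c2) = 0)"

definition line_in_quadric :: "complex^4^4 \<Rightarrow> complex^4 \<Rightarrow> complex^4 \<Rightarrow> bool" where
  "line_in_quadric M c d \<longleftrightarrow> (\<forall>a. d \<noteq> a *s c) \<and> (\<forall>a b. qform M (a *s c + b *s d) = 0)"

text \<open>A quadratic map P^2 --> P^2 given by three homogeneous quadrics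
  (each given by a symmetric 3x3 matrix).\<close>
definition quad_map :: "complex^3^3^3 \<Rightarrow> bool" where
  "quad_map F \<longleftrightarrow> (\<forall>k. transpose (F $ k) = F $ k)"

definition cmap :: "complex^3^3^3 \<Rightarrow> complex^3 \<Rightarrow> complex^3" where
  "cmap F x = (\<chi> k. qform (F $ k) x)"

definition inverse_rational :: "complex^3^3^3 \<Rightarrow> complex^3^3^3 \<Rightarrow> bool" where
  "inverse_rational F G \<longleftrightarrow>
     (\<forall>x. \<exists>c. cmap G (cmap F x) = c *s x) \<and> (\<exists>x. cmap G (cmap F x) \<noteq> 0) \<and>
     (\<forall>y. \<exists>c. cmap F (cmap G y) = c *s y) \<and> (\<exists>y. cmap F (cmap G y) \<noteq> 0)"

definition quad_cremona :: "complex^3^3^3 \<Rightarrow> complex^3^3^3 \<Rightarrow> bool" where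
  "quad_cremona F G \<longleftrightarrow> quad_map F \<and> quad_map G \<and> inverse_rational F G"

definition base_points :: "complex^3^3^3 \<Rightarrow> (complex^3) set set" where
  "base_points F = {proj_class x | x. x \<noteq> 0 \<and> cmap F x = 0}"

definition nondegenerate :: "complex^3^3^3 \<Rightarrow> bool" where
  "nondegenerate F \<longleftrightarrow> card (base_points F) = 3"

end

theory Submission
  imports Defs
begin


definition dotc :: "complex^'n \<Rightarrow> complex^'n \<Rightarrow> complex" where
  "dotc x y = (\<Sum>i\<in>UNIV. x $ i * y $ i)"

definition bf :: "complex^'n^'n \<Rightarrow> complex^'n \<Rightarrow> complex^'n \<Rightarrow> complex" where
  "bf M x y = dotc x (M *v y)"

lemma mv_smult: "(A::complex^'n^'m) *v (c *s x) = c *s (A *v x)"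
  by (vector matrix_vector_mult_def sum_distrib_left algebra_simps)

lemma dotc_add_left[simp]: "dotc (x + y) z = dotc x z + dotc y z"
  by (simp add: dotc_def sum.distrib algebra_simps)
lemma dotc_add_right[simp]: "dotc z (x + y) = dotc z x + dotc z y"
  by (simp add: dotc_def sum.distrib algebra_simps)
lemma dotc_diff_left[simp]: "dotc (x - y) z = dotc x z - dotc y z"
  by (simp add: dotc_def sum_subtractf algebra_simps)
lemma dotc_diff_right[simp]: "dotc z (x - y) = dotc z x - dotc z y"
  by (simp add: dotc_def sum_subtractf algebra_simps)
lemma dotc_smult_left[simp]: "dotc (c *s x) z = c * dotc x z"
  by (simp add: dotc_def sum_distrib_left algebra_simps)
lemma dotc_smult_right[simp]: "dotc z (c *s x) = c * dotc z x"
  by (simp add: dotc_def sum_distrib_left algebra_simps)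
lemma dotc_zero_left[simp]: "dotc 0 z = 0" by (simp add: dotc_def)
lemma dotc_zero_right[simp]: "dotc z 0 = 0" by (simp add: dotc_def)
lemma dotc_neg_left[simp]: "dotc (- x) z = - dotc x z" by (simp add: dotc_def sum_negf)
lemma dotc_neg_right[simp]: "dotc z (- x) = - dotc z x" by (simp add: dotc_def sum_negf)
lemma dotc_comm: "dotc x y = dotc y x" by (simp add: dotc_def mult.commute)

lemma dotc_transpose: "dotc x (A *v y) = dotc (transpose A *v x) y"
proof -
  have "dotc x (A *v y) = (\<Sum>i\<in>UNIV. \<Sum>j\<in>UNIV. x$i * (A$i$j * y$j))"
    by (simp add: dotc_def matrix_vector_mult_def sum_distrib_left)
  also have "\<dots> = (\<Sum>j\<in>UNIV. \<Sum>i\<in>UNIV. x$i * (A$i$j * y$j))" by (rule sum.swap)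
  also have "\<dots> = dotc (transpose A *v x) y"
    unfolding dotc_def matrix_vector_mult_def transpose_def
    by (simp add: sum_distrib_left mult.commute mult.left_commute)
  finally show ?thesis .
qed

lemma qform_bf: "qform M x = bf M x x"
  by (simp add: qform_def bf_def dotc_def)

lemma bf_add_left[simp]: "bf M (x + y) z = bf M x z + bf M y z" by (simp add: bf_def)
lemma bf_add_right[simp]: "bf M z (x + y) = bf M z x + bf M z y" by (simp add: bf_def matrix_vector_right_distrib)
lemma bf_diff_left[simp]: "bf M (x - y) z = bf M x z - bf M y z" by (simp add: bf_def)
lemma bf_diff_right[simp]: "bf M z (x - y) = bf M z x - bf M z y" by (simp add: bf_def matrix_vector_mult_diff_distrib)
lemma bf_smult_left[simp]: "bf M (c *s x) z = c * bf M x z" by (simp add: bf_def)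
lemma bf_smult_right[simp]: "bf M z (c *s x) = c * bf M z x" by (simp add: bf_def mv_smult)
lemma bf_zero_left[simp]: "bf M 0 z = 0" by (simp add: bf_def)
lemma bf_zero_right[simp]: "bf M z 0 = 0" by (simp add: bf_def)
lemma bf_neg_left[simp]: "bf M (- x) z = - bf M x z" by (simp add: bf_def)
lemma bf_neg_right[simp]: "bf M z (- x) = - bf M z x"
  by (metis bf_smult_right mult_minus1 vector_sneg_minus1)

lemma bf_sym: "transpose M = M \<Longrightarrow> bf M x y = bf M y x"
  unfolding bf_def by (metis dotc_comm dotc_transpose)

lemma bf_axis: "bf M (axis i 1) y = (M *v y) $ i"
proof -
  have "\<And>j. axis i 1 $ j * (M *v y) $ j = (if j = i then (M *v y) $ j else 0)"
    by (simp add: axis_def)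
  then show ?thesis by (simp add: bf_def dotc_def)
qed

lemma nondeg:
  assumes "det M \<noteq> 0" "\<And>y. bf M y w = 0"
  shows "w = 0"
proof -
  have "M *v w = 0" using assms(2) by (simp add: vec_eq_iff flip: bf_axis)
  moreover obtain N where "N ** M = mat 1" using assms(1) invertible_det_nz invertible_def by blast
  ultimately show ?thesis by (metis matrix_vector_mul_assoc matrix_vector_mul_lid matrix_vector_mult_0_right)
qed

lemma cmap_smult: "cmap F (k *s x) = (k^2) *s cmap F x"
  by (simp add: cmap_def qform_bf vec_eq_iff power2_eq_square)

lemma proj_class_smult: assumes "k \<noteq> 0" shows "proj_class (k *s v) = proj_class v"
  unfolding proj_class_def
proof (intro set_eqI iffI)
  fix x assume "x \<in> {c *s (k *s v) |c. c \<noteq> 0}"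
  then obtain c where "c \<noteq> 0" "x = c *s (k *s v)" by blast
  moreover have "c * k \<noteq> 0" using \<open>k \<noteq> 0\<close> \<open>c \<noteq> 0\<close> by simp
  ultimately show "x \<in> {c *s v |c. c \<noteq> 0}"
    by (metis (mono_tags, lifting) mem_Collect_eq vector_smult_assoc)
next
  fix x assume "x \<in> {c *s v |c. c \<noteq> 0}"
  then obtain c where "c \<noteq> 0" "x = c *s v" by blast
  moreover have "c *s v = (c / k) *s (k *s v)"
  proof -
    have "c / k * k = c" using \<open>k \<noteq> 0\<close> by simp
    then show ?thesis by (simp only: vector_smult_assoc)
  qed
  moreover have "c / k \<noteq> 0" using \<open>k \<noteq> 0\<close> \<open>c \<noteq> 0\<close> by simp
  ultimately show "x \<in> {c *s (k *s v) |c. c \<noteq> 0}" by blast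
qed

lemma proj_class_eqD: "x \<noteq> 0 \<Longrightarrow> proj_class x = proj_class y \<Longrightarrow> \<exists>k. k \<noteq> 0 \<and> x = k *s y"
proof -
  assume "x \<noteq> 0" "proj_class x = proj_class y"
  have "x \<in> proj_class x" unfolding proj_class_def by (rule CollectI, rule exI[of _ 1]) simp
  then obtain c where "c \<noteq> 0" "x = c *s y" using \<open>proj_class x = proj_class y\<close> unfolding proj_class_def by blast
  then show ?thesis by blast
qed



lemma rank3_rinv:
  fixes A :: "complex^4^3"
  assumes "rank A = 3"
  shows "\<exists>S. A ** S = mat 1"
proof (rule ccontr)
  assume "\<not> (\<exists>S. A ** S = mat 1)"
  then obtain c i where c: "(\<Sum>j\<in>UNIV. c j *s row j A) = 0" and ci: "c i \<noteq> 0"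
    unfolding matrix_right_invertible_independent_rows by blast
  let ?U = "UNIV :: 3 set"
  have fU: "finite ?U" by simp
  have thr0: "row i A = (\<Sum>j\<in>?U - {i}. (- c j / c i) *s row j A)"
  proof -
    have "c i *s row i A + (\<Sum>j\<in>?U - {i}. c j *s row j A) = 0"
      using c by (simp add: sum.remove[OF fU, of i])
    then have "c i *s row i A = - (\<Sum>j\<in>?U - {i}. c j *s row j A)"
      by (simp add: eq_neg_iff_add_eq_0)
    then have "(1 / c i) *s (c i *s row i A) = (1 / c i) *s (- (\<Sum>j\<in>?U - {i}. c j *s row j A))"
      by simp
    then have "row i A = (- 1 / c i) *s (\<Sum>j\<in>?U - {i}. c j *s row j A)"
      using ci by (simp only: vector_smult_assoc) (simp add: vector_smult_rneg vector_smult_lneg)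
    also have "\<dots> = (\<Sum>j\<in>?U - {i}. (- c j / c i) *s row j A)"
      by (simp add: vec.scale_sum_right vector_smult_assoc)
    finally show ?thesis .
  qed
  let ?R = "(\<lambda>j. row j A) ` (?U - {i})"
  have sub: "rows A \<subseteq> vec.span ?R"
  proof
    fix r assume "r \<in> rows A"
    then obtain j where j: "r = row j A" unfolding rows_def by blast
    show "r \<in> vec.span ?R"
    proof (cases "j = i")
      case True
      then have ri: "r = row i A" by (simp add: j)
      show ?thesis unfolding ri thr0
        apply (rule vec.span_sum)
        apply (rule vec.span_scale)
        apply (rule vec.span_base)
        by auto
    next
      case False
      then show ?thesis unfolding j by (auto intro!: vec.span_base)
    qed
  qed
  have "card ?R \<le> card (?U - {i})" by (rule card_image_le) simp
  also have "\<dots> = 2" by simp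
  finally have "card ?R \<le> 2" .
  moreover have "vec.dim (rows A) \<le> card ?R" by (rule vec.dim_le_card[OF sub]) simp
  ultimately show False using assms unfolding row_rank_def_gen by simp
qed

lemma rinv_ker:
  fixes A :: "complex^4^3" and S :: "complex^3^4"
  assumes AS: "A ** S = mat 1" and Ac: "A *v c = 0" and c0: "c \<noteq> 0" and Ax: "A *v x = 0"
  shows "\<exists>k. x = k *s c"
proof (rule ccontr)
  assume nx: "\<not> (\<exists>k. x = k *s c)"
  define s where "s i = S *v axis i 1" for i :: 3
  have As: "A *v s i = axis i 1" for i
    by (simp add: s_def matrix_vector_mul_assoc AS)
  have ax: "axis i (1::complex) \<noteq> axis j 1" if "i \<noteq> j" for i j :: 3
    using that by (simp add: axis_eq_axis)
  have ax0: "axis i (1::complex) \<noteq> 0" for i :: 3 by (simp add: axis_eq_0_iff)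
  have d1: "c \<noteq> x" using nx by (metis vector_smult_lid)
  have d2: "c \<noteq> s i" for i using As[of i] Ac ax0[of i] by auto
  have d3: "x \<noteq> s i" for i using As[of i] Ax ax0[of i] by auto
  have d4: "s i \<noteq> s j" if "i \<noteq> j" for i j using As[of i] As[of j] ax[OF that] by auto
  have d12: "s 1 \<noteq> s 2" "s 1 \<noteq> s 3" "s 2 \<noteq> s 3" by (auto intro!: d4)
  define T where "T = {c, x, s 1, s 2, s 3}"
  have fT: "finite T" by (simp add: T_def)
  have cardT: "card T = 5" unfolding T_def using d1 d2 d3 d12 by simp
  have indT: "vec.independent T"
  proof (rule vec.independent_if_scalars_zero[OF fT])
    fix f y
    assume sum0: "(\<Sum>y\<in>T. f y *s y) = 0" and yT: "y \<in> T"
    have eq: "f c *s c + f x *s x + f (s 1) *s s 1 + f (s 2) *s s 2 + f (s 3) *s s 3 = 0"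
      using sum0 unfolding T_def using d1 d2 d3 d12 by (simp add: add.assoc)
    have "A *v (f c *s c + f x *s x + f (s 1) *s s 1 + f (s 2) *s s 2 + f (s 3) *s s 3) = 0"
      using eq by simp
    then have "f (s 1) *s axis 1 1 + f (s 2) *s axis 2 1 + f (s 3) *s axis 3 1 = (0::complex^3)"
      by (simp add: matrix_vector_right_distrib mv_smult As Ac Ax)
    then have z: "f (s 1) = 0" "f (s 2) = 0" "f (s 3) = 0"
      by (auto simp: vec_eq_iff axis_def forall_3)
    then have eq2: "f c *s c + f x *s x = 0" using eq by simp
    have fx: "f x = 0"
    proof (rule ccontr)
      assume "f x \<noteq> 0"
      have "f x *s x = - (f c *s c)" using eq2 by (simp add: eq_neg_iff_add_eq_0 add.commute)
      then have "(1 / f x) *s (f x *s x) = (1 / f x) *s (- (f c *s c))" by simp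
      then have "x = (- f c / f x) *s c" using \<open>f x \<noteq> 0\<close>
        by (simp only: vector_smult_assoc vector_smult_rneg) (simp add: vector_smult_lneg)
      then show False using nx by blast
    qed
    then have "f c = 0" using eq2 c0 by simp
    then show "f y = 0" using yT z fx unfolding T_def by auto
  qed
  have "card T \<le> vec.dim (UNIV :: (complex^4) set)"
    by (rule vec.independent_card_le_dim[OF _ indT]) simp
  then show False using cardT by (simp add: card_cart_basis)
qed



lemma bf_sum_right: "finite I \<Longrightarrow> bf M w (\<Sum>i\<in>I. g i) = (\<Sum>i\<in>I. bf M w (g i))"
  by (induction I rule: finite_induct) simp_all

lemma bf_span_zero:
  assumes "finite C" "\<forall>c\<in>C. bf M w c = 0" "y \<in> vec.span C"
  shows "bf M w y = 0"
proof -
  obtain f where "y = (\<Sum>c\<in>C. f c *s c)" using assms(3) vec.span_finite[OF assms(1)] by auto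
  then show ?thesis using assms(1,2) by (simp add: bf_sum_right)
qed

lemma aniso_gen:
  fixes M :: "complex^4^4" and C :: "(complex^4) set"
  assumes sym: "transpose M = M" and det: "det M \<noteq> 0" and fC: "finite C" and cC: "card C < 4"
    and Pw: "\<And>x c. c \<in> C \<Longrightarrow> bf M c (P x) = 0"
    and Pd: "\<And>x. x - P x \<in> vec.span C"
  shows "\<exists>w. (\<forall>c\<in>C. bf M c w = 0) \<and> bf M w w \<noteq> 0"
proof (rule ccontr)
  assume "\<not> ?thesis"
  then have H: "\<And>w. (\<forall>c\<in>C. bf M c w = 0) \<Longrightarrow> bf M w w = 0" by blast
  have zero: "w = 0" if wV: "\<forall>c\<in>C. bf M c w = 0" for w
  proof (rule nondeg[OF det])
    fix y
    have a: "bf M w (y - P y) = 0"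
      by (rule bf_span_zero[OF fC _ Pd]) (use wV bf_sym[OF sym] in auto)
    have "\<forall>c\<in>C. bf M c (w + P y) = 0" using wV Pw by simp
    then have "bf M (w + P y) (w + P y) = 0" by (rule H)
    moreover have "bf M w w = 0" using H wV by blast
    moreover have "bf M (P y) (P y) = 0" using H Pw by blast
    ultimately have b: "bf M w (P y) = 0" using bf_sym[OF sym, of "P y" w] by simp
    have "bf M w y = bf M w (y - P y) + bf M w (P y)" by simp
    then have "bf M w y = 0" using a b by simp
    then show "bf M y w = 0" using bf_sym[OF sym] by metis
  qed
  have "UNIV \<subseteq> vec.span C"
  proof
    fix x :: "complex^4"
    have "P x = 0" using zero Pw by blast
    then show "x \<in> vec.span C" using Pd[of x] by simp
  qed
  then have "vec.dim (UNIV :: (complex^4) set) \<le> card C" by (rule vec.dim_le_card[OF _ fC])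
  then show False using cC by (simp add: card_cart_basis)
qed

lemma frame:
  fixes M :: "complex^4^4"
  assumes sym: "transpose M = M" and det: "det M \<noteq> 0"
    and q1: "bf M c1 c1 = 0" and q2: "bf M c2 c2 = 0" and b: "bf M c1 c2 \<noteq> 0"
  shows "\<exists>u v. bf M c1 u = 0 \<and> bf M c2 u = 0 \<and> bf M c1 v = 0 \<and> bf M c2 v = 0 \<and> bf M u v = 0
    \<and> bf M u u = 1 \<and> bf M v v = 1 \<and> (\<forall>x. \<exists>a b s t. x = a *s c1 + b *s c2 + s *s u + t *s v)"
proof -
  note S = bf_sym[OF sym]
  define \<beta> where "\<beta> = bf M c1 c2"
  have b21: "bf M c2 c1 = \<beta>" using S \<beta>_def by metis
  have \<beta>0: "\<beta> \<noteq> 0" using b \<beta>_def by simp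
  define P where "P x = x - (bf M c2 x / \<beta>) *s c1 - (bf M c1 x / \<beta>) *s c2" for x
  have "\<exists>w. (\<forall>c\<in>{c1,c2}. bf M c w = 0) \<and> bf M w w \<noteq> 0"
  proof (rule aniso_gen[OF sym det, where P = P])
    show "card {c1, c2} < 4" by (rule le_less_trans[OF card_insert_le_m1]) auto
    show "bf M c (P x) = 0" if "c \<in> {c1, c2}" for x c
      using that \<beta>0 by (auto simp: P_def q1 q2 b21 \<beta>_def[symmetric])
    show "x - P x \<in> vec.span {c1, c2}" for x
    proof -
      have "x - P x = (bf M c2 x / \<beta>) *s c1 + (bf M c1 x / \<beta>) *s c2" by (simp add: P_def)
      also have "\<dots> \<in> vec.span {c1, c2}"
        by (rule vec.span_add; rule vec.span_scale; rule vec.span_base; simp)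
      finally show ?thesis .
    qed
  qed simp
  then obtain u0 where u0: "bf M c1 u0 = 0" "bf M c2 u0 = 0" "bf M u0 u0 \<noteq> 0" by auto
  define \<alpha> where "\<alpha> = bf M u0 u0"
  have u0r: "bf M u0 c1 = 0" "bf M u0 c2 = 0" using u0 S by metis+
  define P' where "P' x = P x - (bf M u0 (P x) / \<alpha>) *s u0" for x
  have "\<exists>w. (\<forall>c\<in>{c1,c2,u0}. bf M c w = 0) \<and> bf M w w \<noteq> 0"
  proof (rule aniso_gen[OF sym det, where P = P'])
    show "card {c1, c2, u0} < 4"
      by (auto simp: card_insert_if)
    show "bf M c (P' x) = 0" if "c \<in> {c1, c2, u0}" for x c
      using that \<beta>0 u0 u0r \<alpha>_def
      by (elim insertE) (simp_all add: P'_def P_def q1 q2 b21 \<beta>_def[symmetric])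
    show "x - P' x \<in> vec.span {c1, c2, u0}" for x
    proof -
      have "x - P' x = (bf M c2 x / \<beta>) *s c1 + (bf M c1 x / \<beta>) *s c2 + (bf M u0 (P x) / \<alpha>) *s u0"
        by (simp add: P'_def P_def)
      also have "\<dots> \<in> vec.span {c1, c2, u0}"
        by (rule vec.span_add vec.span_add; rule vec.span_add vec.span_scale; (rule vec.span_scale)?; rule vec.span_base; simp)
      finally show ?thesis .
    qed
  qed simp
  then obtain v0 where v0: "bf M c1 v0 = 0" "bf M c2 v0 = 0" "bf M u0 v0 = 0" "bf M v0 v0 \<noteq> 0" by auto
  define \<gamma> where "\<gamma> = bf M v0 v0"
  define u where "u = (1 / csqrt \<alpha>) *s u0"
  define v where "v = (1 / csqrt \<gamma>) *s v0"
  have sa: "csqrt \<alpha> \<noteq> 0" using u0(3) \<alpha>_def by simp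
  have sg: "csqrt \<gamma> \<noteq> 0" using v0(4) \<gamma>_def by simp
  have uu: "bf M u u = 1"
  proof -
    have "bf M u u = \<alpha> / (csqrt \<alpha>)^2" by (simp add: u_def \<alpha>_def power2_eq_square)
    then show ?thesis using sa by (simp add: power2_csqrt)
  qed
  have vv: "bf M v v = 1"
  proof -
    have "bf M v v = \<gamma> / (csqrt \<gamma>)^2" by (simp add: v_def \<gamma>_def power2_eq_square)
    then show ?thesis using sg by (simp add: power2_csqrt)
  qed
  have o: "bf M c1 u = 0" "bf M c2 u = 0" "bf M c1 v = 0" "bf M c2 v = 0" "bf M u v = 0"
    using u0 v0 by (simp_all add: u_def v_def)
  have o': "bf M u c1 = 0" "bf M u c2 = 0" "bf M v c1 = 0" "bf M v c2 = 0" "bf M v u = 0"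
    using o S by metis+
  have d: "c1 \<noteq> c2" "c1 \<noteq> u" "c1 \<noteq> v" "c2 \<noteq> u" "c2 \<noteq> v" "u \<noteq> v"
    using q1 q2 \<beta>0 uu vv o o' b21 \<beta>_def by auto
  define T where "T = {c1, c2, u, v}"
  have fT: "finite T" by (simp add: T_def)
  have cT: "card T = 4" using d by (simp add: T_def)
  have indT: "vec.independent T"
  proof (rule vec.independent_if_scalars_zero[OF fT])
    fix f y assume s0: "(\<Sum>y\<in>T. f y *s y) = 0" and yT: "y \<in> T"
    have eq: "f c1 *s c1 + f c2 *s c2 + f u *s u + f v *s v = 0"
      using s0 d unfolding T_def by (simp add: add.assoc)
    have "bf M c2 (f c1 *s c1 + f c2 *s c2 + f u *s u + f v *s v) = 0" using eq by simp
    then have z1: "f c1 = 0" using q2 b21 o \<beta>0 by simp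
    have "bf M c1 (f c1 *s c1 + f c2 *s c2 + f u *s u + f v *s v) = 0" using eq by simp
    then have z2: "f c2 = 0" using q1 o \<beta>0 \<beta>_def by simp
    have "bf M u (f c1 *s c1 + f c2 *s c2 + f u *s u + f v *s v) = 0" using eq by simp
    then have z3: "f u = 0" using o o' uu by simp
    have "bf M v (f c1 *s c1 + f c2 *s c2 + f u *s u + f v *s v) = 0" using eq by simp
    then have z4: "f v = 0" using o o' vv by simp
    show "f y = 0" using yT z1 z2 z3 z4 unfolding T_def by auto
  qed
  have span: "UNIV \<subseteq> vec.span T"
    using vec.card_eq_dim[of T UNIV] indT fT cT by (simp add: card_cart_basis)
  have rep: "\<exists>a b s t. x = a *s c1 + b *s c2 + s *s u + t *s v" for x
  proof -
    have "x \<in> vec.span T" using span by auto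
    then obtain g where "x = (\<Sum>y\<in>T. g y *s y)" using vec.span_finite[OF fT] by auto
    then have "x = g c1 *s c1 + g c2 *s c2 + g u *s u + g v *s v"
      using d unfolding T_def by (simp add: add.assoc)
    then show ?thesis by blast
  qed
  show ?thesis using o uu vv rep by blast
qed



lemma aux_ring: "(b::complex) * a + a * b - d * q = 2 * a * b - q * d" by (simp add: algebra_simps)

lemma transpose_nth: "transpose A $ i $ j = A $ j $ i" by (simp add: transpose_def)

lemma vec_eqI: "(\<And>i. x $ i = y $ i) \<Longrightarrow> x = y" by (simp add: vec_eq_iff)

definition Fmat :: "complex^4^4 \<Rightarrow> complex^3^4 \<Rightarrow> complex^4^3 \<Rightarrow> complex^4 \<Rightarrow> complex^3^3^3" where
  "Fmat M S A2 c = (let m = transpose S *v (M *v c); g = A2 ** S; H = transpose S ** M ** S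
     in (\<chi> k i j. m$i * g$k$j + g$k$i * m$j - (A2 *v c)$k * H$i$j))"

lemma mv_comp: "(A *v x) $ k = dotc (A $ k) x"
  by (simp add: matrix_vector_mult_def dotc_def)

lemma outer_apply:
  "(\<chi> i j. m$i * gk$j + gk$i * m$j - a * H$i$j) *v x = (dotc gk x) *s m + (dotc m x) *s gk - a *s (H *v x)"
  for m gk :: "complex^'n" and H :: "complex^'n^'n"
  by (simp add: vec_eq_iff matrix_vector_mult_def dotc_def sum.distrib sum_subtractf
      sum_distrib_left algebra_simps)

lemma Fmat_row_apply:
  "(Fmat M S A2 c $ k) *v x = (dotc ((A2 ** S)$k) x) *s (transpose S *v (M *v c))
     + (dotc (transpose S *v (M *v c)) x) *s ((A2 ** S)$k)
     - ((A2 *v c)$k) *s ((transpose S ** M ** S) *v x)"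
  unfolding Fmat_def Let_def by (simp add: outer_apply)

lemma Fmat_cmap:
  assumes sym: "transpose M = M"
  shows "cmap (Fmat M S A2 c) x = (2 * bf M c (S *v x)) *s (A2 *v (S *v x)) - qform M (S *v x) *s (A2 *v c)"
proof -
  have m: "dotc (transpose S *v (M *v c)) x = bf M c (S *v x)"
  proof -
    have "dotc (transpose S *v (M *v c)) x = dotc x (transpose S *v (M *v c))" by (rule dotc_comm)
    also have "\<dots> = dotc (S *v x) (M *v c)" by (simp only: dotc_transpose transpose_transpose)
    also have "\<dots> = dotc (M *v c) (S *v x)" by (rule dotc_comm)
    also have "\<dots> = dotc c (M *v (S *v x))" using sym by (simp only: dotc_transpose)
    finally show ?thesis by (simp add: bf_def)
  qed
  have g: "dotc ((A2 ** S)$k) x = (A2 *v (S *v x))$k" for k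
    by (simp add: mv_comp matrix_vector_mul_assoc)
  have H: "dotc x ((transpose S ** M ** S) *v x) = qform M (S *v x)"
  proof -
    have "(transpose S ** M ** S) *v x = transpose S *v (M *v (S *v x))"
      by (simp add: matrix_vector_mul_assoc matrix_mul_assoc)
    then have "dotc x ((transpose S ** M ** S) *v x) = dotc (S *v x) (M *v (S *v x))"
      by (simp only: dotc_transpose transpose_transpose)
    then show ?thesis by (simp add: qform_bf bf_def)
  qed
  have H2: "dotc ((transpose S ** M ** S) *v x) x = qform M (S *v x)" using H by (simp only: dotc_comm)
  have k: "qform (Fmat M S A2 c $ k) x = 2 * bf M c (S *v x) * (A2 *v (S *v x))$k - qform M (S *v x) * (A2 *v c)$k" for k
  proof -
    have "qform (Fmat M S A2 c $ k) x = dotc x ((Fmat M S A2 c $ k) *v x)"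
      by (simp add: qform_def dotc_def)
    also have "\<dots> = dotc ((A2 ** S)$k) x * dotc x (transpose S *v (M *v c))
       + dotc (transpose S *v (M *v c)) x * dotc x ((A2 ** S)$k)
       - (A2 *v c)$k * dotc x ((transpose S ** M ** S) *v x)"
      by (simp only: Fmat_row_apply dotc_add_right dotc_diff_right dotc_smult_right)
    also have "\<dots> = 2 * bf M c (S *v x) * (A2 *v (S *v x))$k - qform M (S *v x) * (A2 *v c)$k"
      by (simp only: dotc_comm[of x] m g H2) (rule aux_ring)
    finally show ?thesis .
  qed
  show ?thesis unfolding cmap_def
    by (rule vec_eqI) (simp only: vec_lambda_beta k vector_minus_component vector_smult_component)
qed

lemma Fmat_sym:
  assumes sym: "transpose M = M"
  shows "quad_map (Fmat M S A2 c)"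
proof -
  have H: "transpose (transpose S ** M ** S) = transpose S ** M ** S"
    by (simp add: matrix_transpose_mul sym matrix_mul_assoc)
  have Hs: "(transpose S ** M ** S) $ i $ j = (transpose S ** M ** S) $ j $ i" for i j
    using H[THEN arg_cong[where f="\<lambda>A. A $ j $ i"]] by (simp only: transpose_nth)
  show ?thesis unfolding quad_map_def
  proof
    fix k
    show "transpose (Fmat M S A2 c $ k) = Fmat M S A2 c $ k"
    proof (rule vec_eqI, rule vec_eqI)
      fix i j
      let ?m = "transpose S *v (M *v c)" and ?g = "A2 ** S" and ?H = "transpose S ** M ** S"
      have "transpose (Fmat M S A2 c $ k) $ i $ j = ?m$j * ?g$k$i + ?g$k$j * ?m$i - (A2 *v c)$k * ?H$j$i"
        by (simp only: transpose_nth Fmat_def Let_def vec_lambda_beta)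
      also have "\<dots> = ?m$i * ?g$k$j + ?g$k$i * ?m$j - (A2 *v c)$k * ?H$i$j"
        by (simp only: Hs[of j i]) (simp add: mult.commute)
      also have "\<dots> = Fmat M S A2 c $ k $ i $ j" by (simp only: Fmat_def Let_def vec_lambda_beta)
      finally show "transpose (Fmat M S A2 c $ k) $ i $ j = Fmat M S A2 c $ k $ i $ j" .
    qed
  qed
qed



locale half =
  fixes M :: "complex^4^4" and A1 A2 :: "complex^4^3" and S :: "complex^3^4" and c1 c2 :: "complex^4"
  assumes sym: "transpose M = M" and det: "det M \<noteq> 0"
    and q1: "bf M c1 c1 = 0" and q2: "bf M c2 c2 = 0" and b: "bf M c1 c2 \<noteq> 0"
    and AS: "A1 ** S = mat 1" and A1c: "A1 *v c1 = 0" and c10: "c1 \<noteq> 0"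
    and ker1: "\<And>x. A1 *v x = 0 \<Longrightarrow> \<exists>k. x = k *s c1"
    and A2c: "A2 *v c2 = 0" and ker2: "\<And>x. A2 *v x = 0 \<Longrightarrow> \<exists>k. x = k *s c2"
begin

abbreviation "F \<equiv> Fmat M S A2 c1"

definition pt where "pt x = (2 * bf M c1 (S *v x)) *s (S *v x) - bf M (S *v x) (S *v x) *s c1"

lemma bsym: "bf M x y = bf M y x" using bf_sym[OF sym] .

lemma b21: "bf M c2 c1 = bf M c1 c2" by (rule bsym)

lemma F_quad: "quad_map F" by (rule Fmat_sym[OF sym])

lemma A1S: "A1 *v (S *v x) = x" by (simp add: matrix_vector_mul_assoc AS)

lemma F_pt: "cmap F x = A2 *v pt x"
  by (simp add: Fmat_cmap[OF sym] pt_def matrix_vector_mult_diff_distrib mv_smult qform_bf)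

lemma pt_q: "bf M (pt x) (pt x) = 0"
proof -
  have "bf M (pt x) (pt x) = 0"
    unfolding pt_def using q1 by (simp add: bsym[of "S *v x" c1])
  then show ?thesis .
qed

lemma A1_pt: "A1 *v pt x = (2 * bf M c1 (S *v x)) *s x"
  by (simp add: pt_def matrix_vector_mult_diff_distrib mv_smult A1S A1c)

lemma key:
  assumes pq: "bf M p p = 0"
  shows "cmap F (A1 *v p) = (2 * bf M c1 p) *s (A2 *v p)"
proof -
  define q where "q = S *v (A1 *v p)"
  have "A1 *v (q - p) = 0" by (simp add: q_def A1S matrix_vector_mult_diff_distrib)
  then obtain t where "q - p = t *s c1" using ker1 by blast
  then have qe: "q = p + t *s c1" by (simp add: algebra_simps)
  have "cmap F (A1 *v p) = (2 * bf M c1 q) *s (A2 *v q) - bf M q q *s (A2 *v c1)"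
    by (simp add: Fmat_cmap[OF sym] q_def qform_bf)
  also have "\<dots> = (2 * bf M c1 p) *s (A2 *v p)"
    unfolding qe using q1 pq
    by (simp add: bsym[of p c1] matrix_vector_right_distrib mv_smult vec_eq_iff algebra_simps)
  finally show ?thesis .
qed

lemma line_char:
  "line_in_quadric M c1 d \<longleftrightarrow> (\<forall>a. d \<noteq> a *s c1) \<and> bf M c1 d = 0 \<and> bf M d d = 0"
proof -
  have e: "qform M (a *s c1 + b *s d) = 2 * a * b * bf M c1 d + b * b * bf M d d" for a b
    using q1 by (simp add: qform_bf bsym[of d c1] algebra_simps)
  show ?thesis
  proof
    assume L: "line_in_quadric M c1 d"
    then have "\<forall>a b. qform M (a *s c1 + b *s d) = 0" by (simp add: line_in_quadric_def)
    then have z: "2 * a * b * bf M c1 d + b * b * bf M d d = 0" for a b by (simp add: e)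
    have dd: "bf M d d = 0" using z[of 0 1] by simp
    have "bf M c1 d = 0" using z[of 1 1] dd by simp
    then show "(\<forall>a. d \<noteq> a *s c1) \<and> bf M c1 d = 0 \<and> bf M d d = 0"
      using L dd by (simp add: line_in_quadric_def)
  next
    assume "(\<forall>a. d \<noteq> a *s c1) \<and> bf M c1 d = 0 \<and> bf M d d = 0"
    then show "line_in_quadric M c1 d" by (simp add: line_in_quadric_def e)
  qed
qed

lemma A1_nz: "bf M w c1 = 0 \<Longrightarrow> bf M w x \<noteq> 0 \<Longrightarrow> A1 *v x \<noteq> 0"
  using ker1 by force

lemma A1_prop: "A1 *v x = k *s (A1 *v y) \<Longrightarrow> \<exists>m. x = k *s y + m *s c1"
proof -
  assume "A1 *v x = k *s (A1 *v y)"
  then have "A1 *v (x - k *s y) = 0" by (simp add: matrix_vector_mult_diff_distrib mv_smult)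
  then obtain m where "x - k *s y = m *s c1" using ker1 by blast
  then show ?thesis by (metis add_diff_cancel_left' diff_add_cancel add.commute)
qed

lemma A1c2_nz: "A1 *v c2 \<noteq> 0"
  using A1_nz[of c1 c2] q1 b by simp

lemma base_F:
  "base_points F = {proj_class (A1 *v c2)} \<union> {proj_class (A1 *v d) | d. line_in_quadric M c1 d}"
proof (intro set_eqI iffI)
  fix X assume "X \<in> base_points F"
  then obtain x where X: "X = proj_class x" and x0: "x \<noteq> 0" and Fx: "cmap F x = 0"
    unfolding base_points_def by blast
  define q where "q = S *v x"
  have hq: "A1 *v q = x" by (simp add: q_def A1S)
  define \<alpha> where "\<alpha> = 2 * bf M c1 q"
  define \<gamma> where "\<gamma> = bf M q q"
  have pte: "pt x = \<alpha> *s q - \<gamma> *s c1" by (simp add: pt_def \<alpha>_def \<gamma>_def q_def)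
  have "A2 *v pt x = 0" using Fx by (simp add: F_pt)
  then obtain \<mu> where mu: "pt x = \<mu> *s c2" using ker2 by blast
  have "bf M c1 (pt x) = \<alpha> * bf M c1 q" using q1 by (simp add: pte)
  then have mb: "\<mu> * bf M c1 c2 = \<alpha> * bf M c1 q" using mu by simp
  show "X \<in> {proj_class (A1 *v c2)} \<union> {proj_class (A1 *v d) | d. line_in_quadric M c1 d}"
  proof (cases "\<alpha> = 0")
    case True
    then have "\<mu> = 0" using mb b by simp
    then have "\<gamma> *s c1 = 0" using mu pte True by simp
    then have g0: "\<gamma> = 0" using c10 by simp
    have bq: "bf M c1 q = 0" using True \<alpha>_def by simp
    have nq: "\<forall>a. q \<noteq> a *s c1"
    proof
      fix a show "q \<noteq> a *s c1" using hq x0 A1c by (auto simp: mv_smult)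
    qed
    have "line_in_quadric M c1 q" using line_char nq bq g0 \<gamma>_def by simp
    then show ?thesis using X hq by blast
  next
    case False
    have "\<alpha> *s q = \<mu> *s c2 + \<gamma> *s c1" using mu pte by (simp add: algebra_simps)
    then have "A1 *v (\<alpha> *s q) = A1 *v (\<mu> *s c2 + \<gamma> *s c1)" by simp
    then have ax: "\<alpha> *s x = \<mu> *s (A1 *v c2)"
      by (simp add: mv_smult matrix_vector_right_distrib A1c hq)
    then have "(1 / \<alpha>) *s (\<alpha> *s x) = (1 / \<alpha>) *s (\<mu> *s (A1 *v c2))" by simp
    then have xe: "x = (\<mu> / \<alpha>) *s (A1 *v c2)" using False by (simp add: vector_smult_assoc)
    have "\<mu> \<noteq> 0" using x0 xe by auto
    then have "X = proj_class (A1 *v c2)" using X xe False by (simp add: proj_class_smult)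
    then show ?thesis by blast
  qed
next
  fix X assume X: "X \<in> {proj_class (A1 *v c2)} \<union> {proj_class (A1 *v d) | d. line_in_quadric M c1 d}"
  show "X \<in> base_points F"
  proof (cases "X = proj_class (A1 *v c2)")
    case True
    have "cmap F (A1 *v c2) = 0" using key[OF q2] A2c by simp
    then show ?thesis using True A1c2_nz unfolding base_points_def by blast
  next
    case False
    then obtain d where X: "X = proj_class (A1 *v d)" and L: "line_in_quadric M c1 d" using X by blast
    then have nd: "\<forall>a. d \<noteq> a *s c1" and bd: "bf M c1 d = 0" and dd: "bf M d d = 0"
      using line_char by auto
    have "cmap F (A1 *v d) = 0" using key[OF dd] bd by simp
    moreover have "A1 *v d \<noteq> 0" using ker1 nd by metis
    ultimately show ?thesis using X unfolding base_points_def by blast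
  qed
qed

end



context half begin

lemma lines:
  obtains Pp Pm where "{proj_class (A1 *v d) | d. line_in_quadric M c1 d} = {Pp, Pm}"
    "Pp \<noteq> Pm" "proj_class (A1 *v c2) \<noteq> Pp" "proj_class (A1 *v c2) \<noteq> Pm"
proof -
  obtain u v where o: "bf M c1 u = 0" "bf M c2 u = 0" "bf M c1 v = 0" "bf M c2 v = 0" "bf M u v = 0"
    and uu: "bf M u u = 1" and vv: "bf M v v = 1"
    and rep: "\<And>x. \<exists>a b s t. x = a *s c1 + b *s c2 + s *s u + t *s v"
    using frame[OF sym det q1 q2 b] by blast
  have o': "bf M u c1 = 0" "bf M u c2 = 0" "bf M v c1 = 0" "bf M v c2 = 0" "bf M v u = 0"
    using o bsym by metis+
  note fr = o o' uu vv q1 q2 b21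
  define \<beta> where "\<beta> = bf M c1 c2"
  have \<beta>0: "\<beta> \<noteq> 0" using b \<beta>_def by simp
  define dp where "dp = \<i> *s u + v"
  define dm where "dm = (- \<i>) *s u + v"
  have Ldp: "line_in_quadric M c1 dp"
  proof -
    have "dp \<noteq> a *s c1" for a
    proof
      assume "dp = a *s c1"
      then have "bf M u dp = bf M u (a *s c1)" by simp
      then show False using fr by (simp add: dp_def)
    qed
    moreover have "bf M c1 dp = 0" "bf M dp dp = 0" using fr by (simp_all add: dp_def)
    ultimately show ?thesis using line_char by blast
  qed
  have Ldm: "line_in_quadric M c1 dm"
  proof -
    have "dm \<noteq> a *s c1" for a
    proof
      assume "dm = a *s c1"
      then have "bf M u dm = bf M u (a *s c1)" by simp
      then show False using fr by (simp add: dm_def)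
    qed
    moreover have "bf M c1 dm = 0" "bf M dm dm = 0" using fr by (simp_all add: dm_def)
    ultimately show ?thesis using line_char by blast
  qed
  have nzp: "A1 *v dp \<noteq> 0" using A1_nz[of u dp] fr by (simp add: dp_def)
  have set: "{proj_class (A1 *v d) | d. line_in_quadric M c1 d} = {proj_class (A1 *v dp), proj_class (A1 *v dm)}"
  proof (intro set_eqI iffI)
    fix X assume "X \<in> {proj_class (A1 *v d) | d. line_in_quadric M c1 d}"
    then obtain d where X: "X = proj_class (A1 *v d)" and L: "line_in_quadric M c1 d" by blast
    then have nd: "\<forall>a. d \<noteq> a *s c1" and bd: "bf M c1 d = 0" and dd: "bf M d d = 0"
      using line_char by auto
    obtain a b' s t where de: "d = a *s c1 + b' *s c2 + s *s u + t *s v" using rep by blast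
    have "bf M c1 d = b' * \<beta>" using fr by (simp add: de \<beta>_def)
    then have b0: "b' = 0" using bd \<beta>0 by simp
    have de2: "d = a *s c1 + s *s u + t *s v" using de b0 by simp
    have "bf M d d = s * s + t * t" using fr by (simp add: de2 algebra_simps)
    then have st: "s * s + t * t = 0" using dd by simp
    have t0: "t \<noteq> 0"
    proof
      assume "t = 0"
      then have "s = 0" using st by simp
      then show False using nd de2 \<open>t = 0\<close> by simp
    qed
    have "(s - \<i> * t) * (s + \<i> * t) = 0" using st by (simp add: algebra_simps)
    then have "s - \<i> * t = 0 \<or> s + \<i> * t = 0" by simp
    then have "s = \<i> * t \<or> s = - \<i> * t"
    proof
      assume "s - \<i> * t = 0" then show ?thesis by simp
    next
      assume "s + \<i> * t = 0"
      then have "s = - (\<i> * t)" by (simp only: eq_neg_iff_add_eq_0)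
      then show ?thesis by simp
    qed
    then show "X \<in> {proj_class (A1 *v dp), proj_class (A1 *v dm)}"
    proof
      assume "s = \<i> * t"
      then have "A1 *v d = t *s (A1 *v dp)"
        by (simp add: de2 dp_def matrix_vector_right_distrib mv_smult A1c vec_eq_iff algebra_simps)
      then show ?thesis using X t0 by (simp add: proj_class_smult)
    next
      assume "s = - \<i> * t"
      then have "A1 *v d = t *s (A1 *v dm)"
        by (simp add: de2 dm_def matrix_vector_right_distrib mv_smult A1c vec_eq_iff algebra_simps)
      then show ?thesis using X t0 by (simp add: proj_class_smult)
    qed
  next
    fix X assume "X \<in> {proj_class (A1 *v dp), proj_class (A1 *v dm)}"
    then show "X \<in> {proj_class (A1 *v d) | d. line_in_quadric M c1 d}" using Ldp Ldm by blast
  qed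
  have d1: "proj_class (A1 *v dp) \<noteq> proj_class (A1 *v dm)"
  proof
    assume "proj_class (A1 *v dp) = proj_class (A1 *v dm)"
    then obtain k where "A1 *v dp = k *s (A1 *v dm)" using proj_class_eqD nzp by blast
    then obtain m where e: "dp = k *s dm + m *s c1" using A1_prop by blast
    have "bf M u dp = bf M u (k *s dm + m *s c1)" using e by simp
    then have k1: "\<i> = - k * \<i>" using fr by (simp add: dp_def dm_def)
    have "bf M v dp = bf M v (k *s dm + m *s c1)" using e by simp
    then have k2: "1 = k" using fr by (simp add: dp_def dm_def)
    show False using k1 k2 by simp
  qed
  have d2: "proj_class (A1 *v c2) \<noteq> proj_class (A1 *v d)" if "bf M c1 d = 0" for d
  proof
    assume "proj_class (A1 *v c2) = proj_class (A1 *v d)"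
    then obtain k where "A1 *v c2 = k *s (A1 *v d)" using proj_class_eqD A1c2_nz by blast
    then obtain m where e: "c2 = k *s d + m *s c1" using A1_prop by blast
    have "bf M c1 c2 = bf M c1 (k *s d + m *s c1)" using e by simp
    then show False using that q1 b by simp
  qed
  show ?thesis
    apply (rule that[OF set d1])
    using d2 fr by (simp_all add: dp_def dm_def)
qed

lemma card_F: "card (base_points F) = 3"
proof -
  obtain Pp Pm where L: "{proj_class (A1 *v d) | d. line_in_quadric M c1 d} = {Pp, Pm}"
    "Pp \<noteq> Pm" "proj_class (A1 *v c2) \<noteq> Pp" "proj_class (A1 *v c2) \<noteq> Pm"
    using lines by blast
  show ?thesis unfolding base_F L(1) using L(2-4) by simp
qed

end



theorem mainTheorem12:
  fixes A1 A2 :: "complex^4^3" and c1 c2 :: "complex^4" and M :: "complex^4^4"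
  assumes "linear_projection A1 c1"
    and "linear_projection A2 c2"
    and "proj_class c1 \<noteq> proj_class c2"
    and "permissible_quadric M c1 c2"
  shows "\<exists>F G. quad_cremona F G \<and> nondegenerate F \<and> nondegenerate G
    \<and> (\<forall>p. on_quadric M p \<and> cmap F (A1 *v p) \<noteq> 0
            \<longrightarrow> (\<exists>a. cmap F (A1 *v p) = a *s (A2 *v p)))
    \<and> base_points F = {proj_class (A1 *v c2)} \<union> {proj_class (A1 *v d) | d. line_in_quadric M c1 d}
    \<and> base_points G = {proj_class (A2 *v c1)} \<union> {proj_class (A2 *v d) | d. line_in_quadric M c2 d}"
proof -
  from assms(1) have r1: "rank A1 = 3" and c10: "c1 \<noteq> 0" and A1c: "A1 *v c1 = 0"
    by (auto simp: linear_projection_def)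
  from assms(2) have r2: "rank A2 = 3" and c20: "c2 \<noteq> 0" and A2c: "A2 *v c2 = 0"
    by (auto simp: linear_projection_def)
  obtain S1 where S1: "A1 ** S1 = mat 1" using rank3_rinv[OF r1] by blast
  obtain S2 where S2: "A2 ** S2 = mat 1" using rank3_rinv[OF r2] by blast
  have ker1: "\<And>x. A1 *v x = 0 \<Longrightarrow> \<exists>k. x = k *s c1" using rinv_ker[OF S1 A1c c10] by blast
  have ker2: "\<And>x. A2 *v x = 0 \<Longrightarrow> \<exists>k. x = k *s c2" using rinv_ker[OF S2 A2c c20] by blast
  from assms(4) have sym: "transpose M = M" and det: "det M \<noteq> 0" and q1: "bf M c1 c1 = 0"
    and q2: "bf M c2 c2 = 0" and nl: "\<not> (\<forall>a b. qform M (a *s c1 + b *s c2) = 0)"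
    unfolding permissible_quadric_def smooth_quadric_def qform_bf[symmetric] by blast+
  note bsym = bf_sym[OF sym]
  have b: "bf M c1 c2 \<noteq> 0"
  proof
    assume b0: "bf M c1 c2 = 0"
    have "qform M (a *s c1 + b *s c2) = 0" for a b
      using q1 q2 b0 bsym[of c2 c1] by (simp add: qform_bf)
    then show False using nl by blast
  qed
  have b': "bf M c2 c1 \<noteq> 0" using b bsym by metis
  interpret h1: half M A1 A2 S1 c1 c2
    by unfold_locales (fact sym det q1 q2 b S1 A1c c10 A2c ker1 ker2)+
  interpret h2: half M A2 A1 S2 c2 c1
    by unfold_locales (fact sym det q2 q1 b' S2 A2c c20 A1c ker2 ker1)+
  define F where "F = Fmat M S1 A2 c1"
  define G where "G = Fmat M S2 A1 c2"
  obtain u where u: "bf M c1 u = 0" "bf M c2 u = 0" "bf M u u = 1"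
    using frame[OF sym det q1 q2 b] by blast
  have u': "bf M u c1 = 0" "bf M u c2 = 0" using u bsym by metis+
  define \<beta> where "\<beta> = bf M c1 c2"
  have b21: "bf M c2 c1 = \<beta>" using bsym \<beta>_def by metis
  have \<beta>0: "\<beta> \<noteq> 0" using b \<beta>_def by simp
  define r where "r = csqrt (- 2 * \<beta>)"
  have r2: "r * r = - 2 * \<beta>" unfolding r_def by (metis power2_csqrt power2_eq_square)
  define p0 where "p0 = c1 + c2 + r *s u"
  have p0q: "bf M p0 p0 = 0"
  proof -
    have "bf M p0 p0 = 2 * \<beta> + r * r"
      using u u' q1 q2 b21 by (simp add: p0_def \<beta>_def[symmetric])
    then show ?thesis using r2 by simp
  qed
  have p1: "bf M c1 p0 = \<beta>" using u q1 by (simp add: p0_def \<beta>_def)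
  have p2: "bf M c2 p0 = \<beta>" using u q2 b21 by (simp add: p0_def)
  have A1p0: "A1 *v p0 \<noteq> 0" using h1.A1_nz[of c1 p0] q1 p1 \<beta>0 by simp
  have A2p0: "A2 *v p0 \<noteq> 0" using h2.A1_nz[of c2 p0] q2 p2 \<beta>0 by simp
  have inv: "inverse_rational F G"
    unfolding inverse_rational_def
  proof (intro conjI allI)
    fix x
    have "cmap G (cmap F x) = cmap G (A2 *v h1.pt x)" by (simp add: F_def h1.F_pt)
    also have "\<dots> = (2 * bf M c2 (h1.pt x)) *s (A1 *v h1.pt x)"
      unfolding G_def by (rule h2.key[OF h1.pt_q])
    also have "\<dots> = (2 * bf M c2 (h1.pt x) * (2 * bf M c1 (S1 *v x))) *s x"
      by (simp add: h1.A1_pt vector_smult_assoc)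
    finally show "\<exists>c. cmap G (cmap F x) = c *s x" by blast
  next
    fix y
    have "cmap F (cmap G y) = cmap F (A1 *v h2.pt y)" by (simp add: G_def h2.F_pt)
    also have "\<dots> = (2 * bf M c1 (h2.pt y)) *s (A2 *v h2.pt y)"
      unfolding F_def by (rule h1.key[OF h2.pt_q])
    also have "\<dots> = (2 * bf M c1 (h2.pt y) * (2 * bf M c2 (S2 *v y))) *s y"
      by (simp add: h2.A1_pt vector_smult_assoc)
    finally show "\<exists>c. cmap F (cmap G y) = c *s y" by blast
  next
    have "cmap G (cmap F (A1 *v p0)) = cmap G ((2 * \<beta>) *s (A2 *v p0))"
      using h1.key[OF p0q] p1 by (simp add: F_def)
    also have "\<dots> = ((2 * \<beta>)^2) *s cmap G (A2 *v p0)" by (rule cmap_smult)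
    also have "\<dots> = ((2 * \<beta>)^2 * (2 * \<beta>)) *s (A1 *v p0)"
      using h2.key[OF p0q] p2 by (simp add: G_def vector_smult_assoc)
    finally show "\<exists>x. cmap G (cmap F x) \<noteq> 0" using \<beta>0 A1p0 by (metis vector_mul_eq_0 mult_eq_0_iff power_not_zero zero_neq_numeral)
  next
    have "cmap F (cmap G (A2 *v p0)) = cmap F ((2 * \<beta>) *s (A1 *v p0))"
      using h2.key[OF p0q] p2 by (simp add: G_def)
    also have "\<dots> = ((2 * \<beta>)^2) *s cmap F (A1 *v p0)" by (rule cmap_smult)
    also have "\<dots> = ((2 * \<beta>)^2 * (2 * \<beta>)) *s (A2 *v p0)"
      using h1.key[OF p0q] p1 by (simp add: F_def vector_smult_assoc)
    finally show "\<exists>y. cmap F (cmap G y) \<noteq> 0" using \<beta>0 A2p0 by (metis vector_mul_eq_0 mult_eq_0_iff power_not_zero zero_neq_numeral)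
  qed
  have "quad_cremona F G"
    unfolding quad_cremona_def using inv h1.F_quad h2.F_quad by (simp add: F_def G_def)
  moreover have "nondegenerate F" "nondegenerate G"
    unfolding nondegenerate_def F_def G_def using h1.card_F h2.card_F by simp_all
  moreover have "\<forall>p. on_quadric M p \<and> cmap F (A1 *v p) \<noteq> 0 \<longrightarrow> (\<exists>a. cmap F (A1 *v p) = a *s (A2 *v p))"
  proof (intro allI impI)
    fix p assume "on_quadric M p \<and> cmap F (A1 *v p) \<noteq> 0"
    then have "bf M p p = 0" by (simp add: on_quadric_def qform_bf)
    then show "\<exists>a. cmap F (A1 *v p) = a *s (A2 *v p)" using h1.key unfolding F_def by blast
  qed
  moreover have "base_points F = {proj_class (A1 *v c2)} \<union> {proj_class (A1 *v d) | d. line_in_quadric M c1 d}"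
    unfolding F_def by (rule h1.base_F)
  moreover have "base_points G = {proj_class (A2 *v c1)} \<union> {proj_class (A2 *v d) | d. line_in_quadric M c2 d}"
    unfolding G_def by (rule h2.base_F)
  ultimately show ?thesis by blast
qed


end
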